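(* Let $n$ be a positive integer and let $p>n+1$ be a prime. (i) If $n$ is odd, then $$\sum_{\substack{0<i_1<\cdots<i_n<p\\ i_1\equiv 1,2\ (\mathrm{mod}\ 6)}}\frac{1}{i_1\cdots i_n}\equiv \sum_{\substack{0<i_1<\cdots<i_n<p\\ i_1\equiv 4,5\ (\mathrm{mod}\ 6)}}\frac{1}{i_1\cdots i_n}\pmod p.$$ (ii) If $n$ is even, then $$\sum_{\substack{0<i_1<\cdots<i_n<p\\ i_1\equiv 0\ (\mathrm{mod}\ 3)}}\frac{(-1)^{i_1}}{i_1\cdots i_n}\equiv 2\sum_{\substack{0<i_1<\cdots<i_n<p\\ i_1\equiv 2,3,4\ (\mathrm{mod}\ 6)}}\frac{1}{i_1\cdots i_n}\pmod p.$$
   Context: All sums range over integers $i_1,\dots,i_n$. The summands are rational numbers whose denominators are not divisible by $p$; for such rationals $a,b$, $a\equiv b \pmod p$ means that $a-b$ lies in $p\mathbb{Z}_{(p)}$ (equivalently, $a-b$ is divisible by $p$ in the ring $\mathbb{Z}_p$ of $p$-adic integers). *)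

theory Defs
  imports Complex_Main "HOL-Computational_Algebra.Primes"
begin

text \<open>Strictly increasing n-tuples 0 < i_1 < ... < i_n < p, represented as lists
  [i_1, ..., i_n]; the first entry i_1 is hd.\<close>
definition incr_tuples :: "nat \<Rightarrow> nat \<Rightarrow> nat list set" where
  "incr_tuples n p = {xs. length xs = n \<and> sorted_wrt (<) xs \<and> (\<forall>i\<in>set xs. 0 < i \<and> i < p)}"

text \<open>Congruence of rationals modulo p: a - b lies in p Z_(p), i.e. p divides the
  numerator of a - b in lowest terms.\<close>
definition rat_cong :: "rat \<Rightarrow> rat \<Rightarrow> int \<Rightarrow> bool" where
  "rat_cong a b p \<longleftrightarrow> p dvd fst (quotient_of (a - b))"

end

theory Submission
  imports Defs "HOL-Number_Theory.Number_Theory"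
begin

definition pint :: "nat \<Rightarrow> rat \<Rightarrow> bool" where
  "pint p q \<longleftrightarrow> (\<exists>a b. \<not> int p dvd b \<and> q = of_int a / of_int b)"

definition rc :: "nat \<Rightarrow> rat \<Rightarrow> rat \<Rightarrow> bool" where
  "rc p x y \<longleftrightarrow> (\<exists>c. pint p c \<and> x - y = of_nat p * c)"

context fixes p :: nat assumes pp: "prime p" begin

lemma ip: "prime (int p)" using pp by simp

lemma ndvd_mult: "\<not> int p dvd b \<Longrightarrow> \<not> int p dvd d \<Longrightarrow> \<not> int p dvd b * d"
  using ip prime_dvd_mult_iff by blast

lemma pint_int[simp]: "pint p (of_int z)"
  unfolding pint_def using pp
  by (intro exI[of _ z] exI[of _ 1]) (auto simp: prime_gt_1_nat)

lemma pint_nat[simp]: "pint p (of_nat z)"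
  using pint_int[of "int z"] by simp

lemma pint_0[simp]: "pint p 0" and pint_1[simp]: "pint p 1"
  using pint_int[of 0] pint_int[of 1] by auto

lemma pint_add[intro]: "pint p x \<Longrightarrow> pint p y \<Longrightarrow> pint p (x + y)"
proof -
  assume "pint p x" "pint p y"
  then obtain a b c d where ab: "\<not> int p dvd b" "x = of_int a / of_int b"
    and cd: "\<not> int p dvd d" "y = of_int c / of_int d" unfolding pint_def by blast
  have b0: "b \<noteq> 0" and d0: "d \<noteq> 0" using ab cd by auto
  have "\<not> int p dvd b * d" using ab cd ndvd_mult by blast
  moreover have "x + y = of_int (a*d + c*b) / of_int (b*d)"
    using b0 d0 ab cd by (simp add: field_simps)
  ultimately show ?thesis unfolding pint_def by blast
qed

lemma pint_mult[intro]: "pint p x \<Longrightarrow> pint p y \<Longrightarrow> pint p (x * y)"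
proof -
  assume "pint p x" "pint p y"
  then obtain a b c d where ab: "\<not> int p dvd b" "x = of_int a / of_int b"
    and cd: "\<not> int p dvd d" "y = of_int c / of_int d" unfolding pint_def by blast
  have "\<not> int p dvd b * d" using ab cd ndvd_mult by blast
  moreover have "x * y = of_int (a*c) / of_int (b*d)"
    using ab cd by simp
  ultimately show ?thesis unfolding pint_def by blast
qed

lemma pint_uminus[intro]: "pint p x \<Longrightarrow> pint p (- x)"
proof -
  assume "pint p x"
  moreover have "pint p (-1)" using pint_int[of "-1"] by simp
  ultimately show ?thesis using pint_mult[of "-1" x] by simp
qed

lemma pint_diff[intro]: "pint p x \<Longrightarrow> pint p y \<Longrightarrow> pint p (x - y)"
  using pint_add[of x "-y"] pint_uminus[of y] by simp

lemma pint_power[intro]: "pint p x \<Longrightarrow> pint p (x ^ k)"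
  by (induction k) auto

lemma pint_sum[intro]: "(\<And>i. i \<in> A \<Longrightarrow> pint p (f i)) \<Longrightarrow> pint p (sum f A)"
  by (induction A rule: infinite_finite_induct) auto

lemma pint_inv: "\<not> int p dvd z \<Longrightarrow> pint p (1 / of_int z)"
  unfolding pint_def by (intro exI[of _ 1] exI[of _ z]) auto

lemma pint_inv_nat: "0 < s \<Longrightarrow> s < p \<Longrightarrow> pint p (1 / of_nat s)"
proof -
  assume "0 < s" "s < p"
  then have "\<not> int p dvd int s" by (auto dest: zdvd_imp_le)
  then show ?thesis using pint_inv[of "int s"] by simp
qed

lemma rc_refl[simp]: "rc p x x"
  unfolding rc_def by (intro exI[of _ 0]) auto

lemma rc_sym: "rc p x y \<Longrightarrow> rc p y x"
  unfolding rc_def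
proof (elim exE conjE)
  fix c assume "pint p c" "x - y = of_nat p * c"
  then show "\<exists>c. pint p c \<and> y - x = of_nat p * c"
    by (intro exI[of _ "- c"]) (auto simp: algebra_simps)
qed

lemma rc_trans[trans]: "rc p x y \<Longrightarrow> rc p y z \<Longrightarrow> rc p x z"
  unfolding rc_def
proof (elim exE conjE)
  fix c d assume "pint p c" "x - y = of_nat p * c" "pint p d" "y - z = of_nat p * d"
  then show "\<exists>c. pint p c \<and> x - z = of_nat p * c"
    by (intro exI[of _ "c + d"]) (auto simp: algebra_simps)
qed

lemma rc_add: "rc p x y \<Longrightarrow> rc p u v \<Longrightarrow> rc p (x + u) (y + v)"
  unfolding rc_def
proof (elim exE conjE)
  fix c d assume "pint p c" "x - y = of_nat p * c" "pint p d" "u - v = of_nat p * d"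
  then show "\<exists>c. pint p c \<and> x + u - (y + v) = of_nat p * c"
    by (intro exI[of _ "c + d"]) (auto simp: algebra_simps)
qed

lemma rc_uminus: "rc p x y \<Longrightarrow> rc p (- x) (- y)"
  unfolding rc_def
proof (elim exE conjE)
  fix c assume "pint p c" "x - y = of_nat p * c"
  then show "\<exists>c. pint p c \<and> - x - (- y) = of_nat p * c"
    by (intro exI[of _ "- c"]) (auto simp: algebra_simps)
qed

lemma rc_diff: "rc p x y \<Longrightarrow> rc p u v \<Longrightarrow> rc p (x - u) (y - v)"
  using rc_add[of x y "-u" "-v"] rc_uminus[of u v] by simp

lemma rc_mult_left: "pint p a \<Longrightarrow> rc p x y \<Longrightarrow> rc p (a * x) (a * y)"
  unfolding rc_def
proof (elim exE conjE)
  fix c assume "pint p a" "pint p c" "x - y = of_nat p * c"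
  then show "\<exists>c. pint p c \<and> a * x - a * y = of_nat p * c"
    by (intro exI[of _ "a * c"]) (auto simp: algebra_simps simp flip: right_diff_distrib)
qed

lemma rc_mult: "pint p u \<Longrightarrow> pint p y \<Longrightarrow> rc p x y \<Longrightarrow> rc p u v \<Longrightarrow> rc p (x * u) (y * v)"
proof -
  assume a: "pint p u" "pint p y" "rc p x y" "rc p u v"
  have "rc p (x * u) (y * u)" using rc_mult_left[OF a(1) a(3)] by (simp add: mult.commute)
  also have "rc p (y * u) (y * v)" using rc_mult_left[OF a(2) a(4)] .
  finally show ?thesis .
qed

lemma rc_sum: "(\<And>i. i \<in> A \<Longrightarrow> rc p (f i) (g i)) \<Longrightarrow> rc p (sum f A) (sum g A)"
  by (induction A rule: infinite_finite_induct) (auto intro: rc_add)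

lemma rc_power: "pint p x \<Longrightarrow> pint p y \<Longrightarrow> rc p x y \<Longrightarrow> rc p (x ^ k) (y ^ k)"
  by (induction k) (auto intro: rc_mult)

lemma rc_int: "[a = b] (mod int p) \<Longrightarrow> rc p (of_int a) (of_int b)"
proof -
  assume "[a = b] (mod int p)"
  then obtain k where "a - b = int p * k"
    by (metis cong_iff_dvd_diff cong_sym dvd_def)
  then have "of_int a - of_int b = (of_nat p :: rat) * of_int k"
    by (metis of_int_diff of_int_mult of_int_of_nat_eq)
  then show ?thesis unfolding rc_def by (intro exI[of _ "of_int k"]) auto
qed

lemma rc_multiple: "pint p c \<Longrightarrow> rc p (of_nat p * c) 0"
  unfolding rc_def by auto

lemma rc_rat_cong: "rc p x y \<Longrightarrow> rat_cong x y (int p)"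
proof -
  assume "rc p x y"
  then obtain c where c: "pint p c" "x - y = of_nat p * c" unfolding rc_def by blast
  then obtain a b where ab: "\<not> int p dvd b" "c = of_int a / of_int b" unfolding pint_def by blast
  obtain n d where nd: "quotient_of (x - y) = (n, d)" by (cases "quotient_of (x - y)")
  have d0: "d > 0" using quotient_of_denom_pos[OF nd] .
  have b0: "b \<noteq> 0" using ab by auto
  have "of_int n / of_int d = (of_nat p :: rat) * (of_int a / of_int b)"
    using quotient_of_div[OF nd] c ab by simp
  then have "of_int (n * b) = (of_int (int p * a * d) :: rat)"
    using d0 b0 by (simp add: field_simps)
  then have "n * b = int p * a * d" by (simp only: of_int_eq_iff)
  then have "int p dvd n * b" by (metis dvd_triv_left mult.assoc)
  then have "int p dvd n" using ab ip prime_dvd_mult_iff by blast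
  then show ?thesis unfolding rat_cong_def using nd by simp
qed

end

fun tup :: "nat \<Rightarrow> nat \<Rightarrow> nat \<Rightarrow> nat list set" where
  "tup p 0 a = {[]}"
| "tup p (Suc k) a = (\<Union>x\<in>{a..<p}. (#) x ` tup p k (Suc x))"

lemma tup_char: "tup p k a = {xs. length xs = k \<and> sorted_wrt (<) xs \<and> (\<forall>i\<in>set xs. a \<le> i \<and> i < p)}"
proof (induction k arbitrary: a)
  case 0
  then show ?case by auto
next
  case (Suc k)
  show ?case
  proof (rule equalityI; rule subsetI)
    fix xs assume "xs \<in> tup p (Suc k) a"
    then show "xs \<in> {xs. length xs = Suc k \<and> sorted_wrt (<) xs \<and> (\<forall>i\<in>set xs. a \<le> i \<and> i < p)}"
      using Suc.IH by fastforce
  next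
    fix xs assume xs: "xs \<in> {xs. length xs = Suc k \<and> sorted_wrt (<) xs \<and> (\<forall>i\<in>set xs. a \<le> i \<and> i < p)}"
    then obtain x ys where xys: "xs = x # ys" by (cases xs) auto
    have "ys \<in> tup p k (Suc x)" using xs xys Suc.IH by auto
    moreover have "x \<in> {a..<p}" using xs xys by auto
    ultimately show "xs \<in> tup p (Suc k) a" using xys by auto
  qed
qed

lemma finite_tup[simp]: "finite (tup p k a)"
  by (induction k arbitrary: a) auto

lemma tup_sum: "sum f (tup p (Suc k) a) = (\<Sum>x\<in>{a..<p}. \<Sum>ys\<in>tup p k (Suc x). f (x # ys))"
proof -
  have "sum f (tup p (Suc k) a) = (\<Sum>x\<in>{a..<p}. sum f ((#) x ` tup p k (Suc x)))"
    by (simp only: tup.simps, rule sum.UNION_disjoint) auto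
  also have "\<dots> = (\<Sum>x\<in>{a..<p}. \<Sum>ys\<in>tup p k (Suc x). f (x # ys))"
    by (rule sum.cong[OF refl], subst sum.reindex) (auto simp: inj_on_def)
  finally show ?thesis .
qed

definition E :: "nat \<Rightarrow> nat \<Rightarrow> nat \<Rightarrow> rat" where
  "E p k a = (\<Sum>xs\<in>tup p k a. 1 / (\<Prod>i\<leftarrow>xs. of_nat i))"

lemma E_0[simp]: "E p 0 a = 1"
  by (simp add: E_def)

lemma E_Suc: "E p (Suc k) a = (\<Sum>x\<in>{a..<p}. 1 / of_nat x * E p k (Suc x))"
  unfolding E_def by (subst tup_sum) (simp add: sum_distrib_left)

lemma E_top[simp]: "E p (Suc k) p = 0"
  by (simp add: E_Suc)

lemma E_step: "a < p \<Longrightarrow> E p (Suc k) a = 1 / of_nat a * E p k (Suc a) + E p (Suc k) (Suc a)"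
proof -
  assume "a < p"
  then have "{a..<p} = insert a {Suc a..<p}" by auto
  then show ?thesis by (simp add: E_Suc)
qed

lemma incr_tup: "incr_tuples n p = tup p n 1"
  unfolding incr_tuples_def tup_char by auto

lemma weighted_sum:
  "(\<Sum>xs\<in>{xs\<in>incr_tuples (Suc k) p. P (hd xs)}. c (hd xs) / (\<Prod>i\<leftarrow>xs. of_nat i)) =
   (\<Sum>x\<in>{1..<p}. (if P x then c x else 0) * (1 / of_nat x * E p k (Suc x)))"
proof -
  have "(\<Sum>xs\<in>{xs\<in>incr_tuples (Suc k) p. P (hd xs)}. c (hd xs) / (\<Prod>i\<leftarrow>xs. of_nat i)) =
     (\<Sum>xs\<in>tup p (Suc k) 1. if P (hd xs) then c (hd xs) / (\<Prod>i\<leftarrow>xs. of_nat i) else 0)"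
    unfolding incr_tup by (rule sum.inter_filter) simp
  also have "\<dots> = (\<Sum>x\<in>{1..<p}. \<Sum>ys\<in>tup p k (Suc x).
        if P x then c x / (of_nat x * (\<Prod>i\<leftarrow>ys. of_nat i)) else 0)"
    by (subst tup_sum) (simp cong: if_cong)
  also have "\<dots> = (\<Sum>x\<in>{1..<p}. (if P x then c x else 0) * (1 / of_nat x * E p k (Suc x)))"
    unfolding E_def by (rule sum.cong[OF refl]) (auto simp: sum_distrib_left)
  finally show ?thesis .
qed

definition F :: "nat \<Rightarrow> nat \<Rightarrow> nat \<Rightarrow> rat" where
  "F p k a = (-1) ^ (k + 1) * (\<Sum>s\<in>{1..<p}. (-1) ^ s * of_nat (a - 1 choose s) * (1 / of_nat s) ^ k)"

lemma trm_alg: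
  fixes u v z r q :: rat
  assumes "u - v = - z" "r * v = z * q"
  shows "(-1) ^ (Suc k + 1) * ((-1) ^ s * u * q ^ Suc k) - (-1) ^ (Suc k + 1) * ((-1) ^ s * v * q ^ Suc k)
       = r * ((-1) ^ (k + 1) * ((-1) ^ s * v * q ^ k))"
proof -
  have "(-1) ^ (Suc k + 1) * ((-1) ^ s * u * q ^ Suc k) - (-1) ^ (Suc k + 1) * ((-1) ^ s * v * q ^ Suc k)
      = (-1) ^ (Suc k + 1) * (-1) ^ s * (u - v) * q ^ Suc k" by (simp add: algebra_simps)
  also have "\<dots> = (-1) ^ (k + 1) * (-1) ^ s * (z * q) * q ^ k" using assms(1) by simp
  also have "\<dots> = (-1) ^ (k + 1) * (-1) ^ s * (r * v) * q ^ k" using assms(2) by simp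
  also have "\<dots> = r * ((-1) ^ (k + 1) * ((-1) ^ s * v * q ^ k))" by (simp add: algebra_simps)
  finally show ?thesis .
qed

lemma F_step:
  assumes "1 \<le> a"
  shows "F p (Suc k) a - F p (Suc k) (Suc a) = 1 / of_nat a * F p k (Suc a)"
proof -
  obtain b where b: "a = Suc b" using assms by (cases a) auto
  have trm: "(-1) ^ (Suc k + 1) * ((-1) ^ s * of_nat (b choose s) * (1 / of_nat s) ^ Suc k)
      - (-1) ^ (Suc k + 1) * ((-1) ^ s * of_nat (Suc b choose s) * (1 / of_nat s) ^ Suc k)
      = 1 / of_nat (Suc b) * ((-1) ^ (k + 1) * ((-1) ^ s * of_nat (Suc b choose s) * (1 / of_nat s) ^ k) :: rat)"
    if s: "s \<in> {1..<p}" for s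
  proof -
    obtain t where t: "s = Suc t" using s by (cases s) auto
    have pas: "Suc b choose Suc t = (b choose t) + (b choose Suc t)" by simp
    have abs: "Suc t * (Suc b choose Suc t) = Suc b * (b choose t)"
      using times_binomial_minus1_eq[of "Suc t" "Suc b"] by (simp only: zero_less_Suc diff_Suc_1 simp_thms)
    have abs': "(of_nat (Suc t) :: rat) * of_nat (Suc b choose Suc t) = of_nat (Suc b) * of_nat (b choose t)"
      using abs by (metis of_nat_mult)
    have pas': "(of_nat (Suc b choose Suc t) :: rat) = of_nat (b choose t) + of_nat (b choose Suc t)"
      using pas by simp
    have e1: "of_nat (b choose s) - of_nat (Suc b choose s) = - (of_nat (b choose t) :: rat)"
      unfolding t pas' by simp
    have e2: "1 / of_nat (Suc b) * of_nat (Suc b choose s) = of_nat (b choose t) * (1 / (of_nat s :: rat))"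
      using abs' unfolding t by (simp add: field_simps)
    show ?thesis by (rule trm_alg[OF e1 e2])
  qed
  have "F p (Suc k) a - F p (Suc k) (Suc a) =
      (\<Sum>s\<in>{1..<p}. (-1) ^ (Suc k + 1) * ((-1) ^ s * of_nat (b choose s) * (1 / of_nat s) ^ Suc k)
      - (-1) ^ (Suc k + 1) * ((-1) ^ s * of_nat (Suc b choose s) * (1 / of_nat s) ^ Suc k))"
    unfolding F_def b diff_Suc_1 by (simp only: sum_distrib_left sum_subtractf)
  also have "\<dots> = (\<Sum>s\<in>{1..<p}. 1 / of_nat (Suc b) * ((-1) ^ (k + 1) * ((-1) ^ s * of_nat (Suc b choose s) * (1 / of_nat s) ^ k)))"
    by (rule sum.cong[OF refl]) (rule trm)
  also have "\<dots> = 1 / of_nat a * F p k (Suc a)"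
    unfolding F_def b diff_Suc_1 by (simp only: sum_distrib_left)
  finally show ?thesis .
qed

lemma F_0:
  assumes "1 \<le> a" "a < p"
  shows "F p 0 (Suc a) = 1"
proof -
  let ?f = "\<lambda>s. (-1) ^ s * (of_nat (a choose s) :: rat)"
  have "(\<Sum>s\<le>a. ?f s) = 0" using choose_alternating_sum[of a] assms by simp
  moreover have "(\<Sum>s<p. ?f s) = (\<Sum>s\<le>a. ?f s)"
    by (rule sum.mono_neutral_right) (use assms in auto)
  moreover have "{..<p} = insert 0 {1..<p}" using assms by auto
  ultimately have "?f 0 + (\<Sum>s\<in>{1..<p}. ?f s) = 0" by simp
  then show ?thesis unfolding F_def by simp
qed

context fixes p :: nat assumes pp: "prime p" begin

lemmas [trans] = rc_trans[OF pp]
lemmas [simp] = rc_refl[OF pp] pint_int[OF pp] pint_nat[OF pp] pint_0[OF pp] pint_1[OF pp]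

lemma pint_m1[simp]: "pint p ((-1) ^ k)"
  using pint_int[OF pp, of "(-1)^k"] by simp

lemma pint_F: "pint p (F p k a)"
proof -
  have "pint p ((-1) ^ s * of_nat (a - 1 choose s) * (1 / of_nat s) ^ k)" if "s \<in> {1..<p}" for s
  proof -
    have "pint p ((1 / of_nat s) ^ k)" using that pint_power[OF pp pint_inv_nat[OF pp, of s]] by auto
    then show ?thesis
      by (intro pint_mult[OF pp]) auto
  qed
  then have "pint p (\<Sum>s\<in>{1..<p}. (-1) ^ s * of_nat (a - 1 choose s) * (1 / of_nat s) ^ k)"
    by (rule pint_sum[OF pp])
  moreover have "pint p ((-1) ^ (k + 1))" by (rule pint_m1)
  ultimately show ?thesis unfolding F_def by (rule pint_mult[OF pp, rotated])
qed

lemma binom_pm1: "s \<le> p - 1 \<Longrightarrow> [int (p - 1 choose s) = (-1) ^ s] (mod int p)"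
proof (induction s)
  case 0
  then show ?case by simp
next
  case (Suc s)
  have p1: "p = Suc (p - 1)" using pp prime_gt_0_nat by simp
  have pas: "p choose Suc s = (p - 1 choose s) + (p - 1 choose Suc s)"
    by (metis binomial_Suc_Suc p1)
  have e: "int (p - 1 choose Suc s) = int (p choose Suc s) - int (p - 1 choose s)"
    using pas by linarith
  have "p dvd (p choose Suc s)"
    using Suc.prems pp by (intro dvd_choose_prime) auto
  then have "[int (p choose Suc s) = 0] (mod int p)"
    by (simp add: cong_0_iff)
  moreover have "[int (p - 1 choose s) = (-1) ^ s] (mod int p)"
    using Suc by simp
  ultimately have "[int (p choose Suc s) - int (p - 1 choose s) = 0 - (-1) ^ s] (mod int p)"
    by (rule cong_diff)
  then show ?case unfolding e by simp
qed

lemma power_sum_all: "m \<le> p - 2 \<Longrightarrow> [(\<Sum>s<p. int s ^ m) = 0] (mod int p)"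
proof (induction m rule: less_induct)
  case (less m)
  define P where "P j = (\<Sum>s<p. int s ^ j)" for j
  have tel: "(\<Sum>s<p. (int s + 1) ^ (m + 1) - int s ^ (m + 1)) = int p ^ (m + 1)"
    using sum_lessThan_telescope[of "\<lambda>s. int s ^ (m + 1)" p] by (simp add: add.commute)
  have exp: "(int s + 1) ^ (m + 1) - int s ^ (m + 1) = (\<Sum>j<m+1. int (m + 1 choose j) * int s ^ j)" for s
  proof -
    have "(int s + 1) ^ (m + 1) = (\<Sum>j\<le>m+1. int (m + 1 choose j) * int s ^ j)"
      by (subst binomial_ring) (simp add: mult.commute)
    also have "\<dots> = (\<Sum>j<m+1. int (m + 1 choose j) * int s ^ j) + int s ^ (m + 1)"
      by (simp add: lessThan_Suc_atMost[symmetric])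
    finally show ?thesis by simp
  qed
  have "(\<Sum>j<m+1. int (m + 1 choose j) * P j) = int p ^ (m + 1)"
    using tel unfolding exp P_def by (simp add: sum_distrib_left sum.swap[of _ "{..<p}"])
  then have eq: "int (m + 1) * P m = int p ^ (m + 1) - (\<Sum>j<m. int (m + 1 choose j) * P j)"
    by simp
  have "[(\<Sum>j<m. int (m + 1 choose j) * P j) = (\<Sum>j<m. int (m + 1 choose j) * 0)] (mod int p)"
    using less by (intro cong_sum cong_mult cong_refl) (auto simp: P_def)
  moreover have "[int p ^ (m + 1) = 0] (mod int p)" by (simp add: cong_0_iff)
  ultimately have "[int (m + 1) * P m = 0 - 0] (mod int p)"
    unfolding eq by (intro cong_diff) auto
  then have "int p dvd int (m + 1) * P m" by (simp add: cong_0_iff)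
  moreover have "\<not> int p dvd int (m + 1)"
  proof
    assume "int p dvd int (m + 1)"
    then have "p dvd m + 1" by (simp only: int_dvd_int_iff)
    then have "p \<le> m + 1" by (simp add: dvd_imp_le)
    then show False using less.prems pp prime_ge_2_nat[OF pp] by linarith
  qed
  ultimately have "int p dvd P m" using ip[OF pp] prime_dvd_mult_iff by blast
  then show ?case by (simp add: P_def cong_0_iff)
qed

lemma power_sum: "1 \<le> m \<Longrightarrow> m \<le> p - 2 \<Longrightarrow> [(\<Sum>s\<in>{1..<p}. int s ^ m) = 0] (mod int p)"
proof -
  assume m: "1 \<le> m" "m \<le> p - 2"
  have "{..<p} = insert 0 {1..<p}" using pp prime_gt_0_nat by auto
  then have "(\<Sum>s<p. int s ^ m) = (\<Sum>s\<in>{1..<p}. int s ^ m)" using m by simp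
  then show ?thesis using power_sum_all[OF m(2)] by simp
qed

lemma inv_power_rc: "0 < s \<Longrightarrow> s < p \<Longrightarrow> k \<le> p - 1 \<Longrightarrow> rc p ((1 / of_nat s) ^ k) (of_nat (s ^ (p - 1 - k)))"
proof -
  assume s: "0 < s" "s < p" "k \<le> p - 1"
  have "\<not> p dvd s" using s by (auto dest: dvd_imp_le)
  then have "[s ^ (p - 1) = 1] (mod p)" using fermat_theorem pp by blast
  then have "[int (s ^ (p - 1)) = 1] (mod int p)" by (metis cong_int_iff of_nat_1)
  then have r1: "rc p (of_int (int (s ^ (p - 1)))) (of_int 1)" by (rule rc_int[OF pp])
  have "rc p ((1 / of_nat s) ^ k * of_nat (s ^ (p - 1))) ((1 / of_nat s) ^ k * 1)"
    using r1 pint_inv_nat[OF pp s(1,2)]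
    by (intro rc_mult_left[OF pp]) (auto intro: pint_power[OF pp])
  moreover have "(1 / of_nat s :: rat) ^ k * of_nat (s ^ (p - 1)) = of_nat (s ^ (p - 1 - k))"
  proof -
    have "s ^ (p - 1) = s ^ (p - 1 - k) * s ^ k" using s by (simp flip: power_add)
    then show ?thesis using s by (simp add: power_one_over field_simps)
  qed
  ultimately show ?thesis by (auto intro: rc_sym[OF pp])
qed

lemma F_top: "1 \<le> k \<Longrightarrow> k \<le> p - 2 \<Longrightarrow> rc p (F p k p) 0"
proof -
  assume k: "1 \<le> k" "k \<le> p - 2"
  have "rc p ((-1) ^ s * of_nat (p - 1 choose s) * (1 / of_nat s) ^ k) (of_int (int s ^ (p - 1 - k)))"
    if s: "s \<in> {1..<p}" for s
  proof -
    have "rc p (of_int (int (p - 1 choose s))) (of_int ((-1) ^ s))"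
      using binom_pm1[of s] s by (intro rc_int[OF pp]) auto
    then have "rc p ((-1) ^ s * of_int (int (p - 1 choose s))) ((-1) ^ s * of_int ((-1) ^ s))"
      using pint_int[OF pp, of "(-1)^s"] by (intro rc_mult_left[OF pp]) auto
    then have a: "rc p ((-1) ^ s * of_nat (p - 1 choose s)) 1"
      by (simp flip: power_mult_distrib)
    have b: "rc p ((1 / of_nat s) ^ k) (of_nat (s ^ (p - 1 - k)))"
      using s k by (intro inv_power_rc) auto
    have "rc p ((-1) ^ s * of_nat (p - 1 choose s) * (1 / of_nat s) ^ k) (1 * of_nat (s ^ (p - 1 - k)))"
    proof (rule rc_mult[OF pp _ _ a b])
      show "pint p ((1 / of_nat s) ^ k)" using s pint_power[OF pp pint_inv_nat[OF pp, of s]] by auto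
    qed simp
    then show ?thesis by simp
  qed
  then have "rc p (\<Sum>s\<in>{1..<p}. (-1) ^ s * of_nat (p - 1 choose s) * (1 / of_nat s) ^ k)
      (\<Sum>s\<in>{1..<p}. of_int (int s ^ (p - 1 - k)))"
    by (rule rc_sum[OF pp])
  also have "rc p (\<Sum>s\<in>{1..<p}. of_int (int s ^ (p - 1 - k))) (of_int 0)"
    unfolding of_int_sum[symmetric] using k pp prime_ge_2_nat[OF pp]
    by (intro rc_int[OF pp] power_sum) auto
  finally have "rc p (\<Sum>s\<in>{1..<p}. (-1) ^ s * of_nat (p - 1 choose s) * (1 / of_nat s) ^ k) 0" by simp
  then have "rc p ((-1) ^ (k + 1) * (\<Sum>s\<in>{1..<p}. (-1) ^ s * of_nat (p - 1 choose s) * (1 / of_nat s) ^ k))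
     ((-1) ^ (k + 1) * 0)"
    using pint_int[OF pp, of "(-1)^(k+1)"] by (intro rc_mult_left[OF pp]) auto
  then show ?thesis unfolding F_def by simp
qed

lemma EF_aux:
  assumes k: "Suc k \<le> p - 2"
    and prev: "\<And>b. 2 \<le> b \<Longrightarrow> b \<le> p \<Longrightarrow> rc p (E p k b) (F p k b)"
  shows "d \<le> p - 1 \<Longrightarrow> rc p (E p (Suc k) (p - d)) (F p (Suc k) (p - d))"
proof (induction d)
  case 0
  have "rc p 0 (F p (Suc k) p)" using F_top[of "Suc k"] k by (auto intro: rc_sym[OF pp])
  then show ?case by simp
next
  case (Suc d)
  define a where "a = p - Suc d"
  have a: "1 \<le> a" "a < p" "Suc a = p - d" using Suc.prems pp prime_gt_0_nat unfolding a_def by auto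
  have IH: "rc p (E p (Suc k) (Suc a)) (F p (Suc k) (Suc a))" using Suc a by auto
  have pr: "rc p (E p k (Suc a)) (F p k (Suc a))" using prev[of "Suc a"] a by auto
  have "rc p (1 / of_nat a * E p k (Suc a) + E p (Suc k) (Suc a))
             (1 / of_nat a * F p k (Suc a) + F p (Suc k) (Suc a))"
    using pr IH a pint_inv_nat[OF pp, of a] by (intro rc_add[OF pp] rc_mult_left[OF pp]) auto
  moreover have "E p (Suc k) a = 1 / of_nat a * E p k (Suc a) + E p (Suc k) (Suc a)"
    using E_step a by blast
  moreover have "F p (Suc k) a = 1 / of_nat a * F p k (Suc a) + F p (Suc k) (Suc a)"
    using F_step[of a p k] a by (simp add: algebra_simps)
  ultimately show ?case unfolding a_def by simp
qed

lemma EF: "1 \<le> k \<Longrightarrow> k \<le> p - 2 \<Longrightarrow> 1 \<le> a \<Longrightarrow> a \<le> p \<Longrightarrow> rc p (E p k a) (F p k a)"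
proof (induction k arbitrary: a rule: nat_induct_at_least)
  case base
  have "rc p (E p (Suc 0) (p - (p - a))) (F p (Suc 0) (p - (p - a)))"
  proof (rule EF_aux)
    show "Suc 0 \<le> p - 2" using base by simp
    show "rc p (E p 0 b) (F p 0 b)" if "2 \<le> b" "b \<le> p" for b
    proof -
      have "b = Suc (b - 1)" using that by simp
      then have "F p 0 b = 1" using F_0[of "b - 1" p] that by (cases "b = p") auto
      then show ?thesis by simp
    qed
    show "p - a \<le> p - 1" using base by simp
  qed
  then show ?case using base by simp
next
  case (Suc k)
  have "rc p (E p (Suc k) (p - (p - a))) (F p (Suc k) (p - (p - a)))"
  proof (rule EF_aux)
    show "Suc k \<le> p - 2" using Suc by simp
    show "rc p (E p k b) (F p k b)" if "2 \<le> b" "b \<le> p" for b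
      using Suc that by simp
    show "p - a \<le> p - 1" using Suc by simp
  qed
  then show ?case using Suc by simp
qed

end

definition W :: "nat \<Rightarrow> (nat \<Rightarrow> int) \<Rightarrow> nat \<Rightarrow> int" where
  "W p w s = (\<Sum>a\<in>{1..<p}. w a * int (a - 1 choose (s - 1)))"

lemma F_shift:
  assumes "1 \<le> x"
  shows "1 / of_nat x * F p k (Suc x) =
    (-1) ^ (k + 1) * (\<Sum>s\<in>{1..<p}. (-1) ^ s * of_nat (x - 1 choose (s - 1)) * (1 / of_nat s) ^ (k + 1))"
proof -
  obtain b where b: "x = Suc b" using assms by (cases x) auto
  have t: "(1 / of_nat x :: rat) * ((-1) ^ s * of_nat (x choose s) * (1 / of_nat s) ^ k) =
        (-1) ^ s * of_nat (x - 1 choose (s - 1)) * (1 / of_nat s) ^ (k + 1)"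
    if s: "s \<in> {1..<p}" for s
  proof -
    obtain t where t: "s = Suc t" using s by (cases s) auto
    have abs: "Suc t * (Suc b choose Suc t) = Suc b * (b choose t)"
      using times_binomial_minus1_eq[of "Suc t" "Suc b"] by (simp only: zero_less_Suc diff_Suc_1 simp_thms)
    have abs': "(of_nat (Suc t) :: rat) * of_nat (Suc b choose Suc t) = of_nat (Suc b) * of_nat (b choose t)"
      using abs by (metis of_nat_mult)
    have e2: "1 / of_nat (Suc b) * of_nat (Suc b choose s) = of_nat (b choose t) * (1 / (of_nat s :: rat))"
      using abs' unfolding t by (simp add: field_simps)
    have "(1 / of_nat x :: rat) * ((-1) ^ s * of_nat (x choose s) * (1 / of_nat s) ^ k) =
        (-1) ^ s * (1 / of_nat (Suc b) * of_nat (Suc b choose s)) * (1 / of_nat s) ^ k"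
      unfolding b by (simp only: mult.assoc) (rule mult.left_commute)
    also have "\<dots> = (-1) ^ s * (of_nat (b choose t) * (1 / (of_nat s :: rat))) * (1 / of_nat s) ^ k"
      by (simp only: e2)
    also have "\<dots> = (-1) ^ s * of_nat (x - 1 choose (s - 1)) * (1 / of_nat s) ^ (k + 1)"
      unfolding b t diff_Suc_1 by (simp add: ac_simps)
    finally show ?thesis .
  qed
  have "1 / of_nat x * F p k (Suc x) =
    (-1) ^ (k + 1) * (\<Sum>s\<in>{1..<p}. 1 / of_nat x * ((-1) ^ s * of_nat (x choose s) * (1 / of_nat s) ^ k))"
    unfolding F_def diff_Suc_1 by (simp only: sum_distrib_left mult_ac)
  also have "\<dots> = (-1) ^ (k + 1) * (\<Sum>s\<in>{1..<p}. (-1) ^ s * of_nat (x - 1 choose (s - 1)) * (1 / of_nat s) ^ (k + 1))"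
    using t by simp
  finally show ?thesis .
qed

context fixes p :: nat assumes pp: "prime p" begin

lemmas [trans] = rc_trans[OF pp]
lemmas [simp] = rc_refl[OF pp] pint_int[OF pp] pint_nat[OF pp] pint_0[OF pp] pint_1[OF pp] pint_m1[OF pp]

lemma pint_invpow: "s \<in> {1..<p} \<Longrightarrow> pint p ((1 / of_nat s) ^ n)"
  using pint_power[OF pp pint_inv_nat[OF pp, of s]] by auto

lemma rc_inv_refl: "s \<in> {1..<p} \<Longrightarrow> rc p (1 / of_nat (p - s)) (- (1 / of_nat s))"
proof -
  assume s: "s \<in> {1..<p}"
  have "1 / of_nat (p - s) - (- (1 / of_nat s)) = (of_nat p :: rat) * (1 / of_nat s * (1 / of_nat (p - s)))"
    using s by (simp add: field_simps of_nat_diff)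
  moreover have "pint p (1 / of_nat s * (1 / of_nat (p - s)))"
    using s by (intro pint_mult[OF pp] pint_inv_nat[OF pp]) auto
  ultimately show ?thesis unfolding rc_def by blast
qed

lemma rc_half: "odd p \<Longrightarrow> rc p x (- x) \<Longrightarrow> rc p x 0"
proof -
  assume odd: "odd p" and "rc p x (- x)"
  then obtain c where c: "pint p c" "x - (- x) = of_nat p * c" unfolding rc_def by blast
  have "2 < p" using odd prime_ge_2_nat[OF pp] by (cases "p = 2") auto
  then have "pint p (1 / of_nat 2)" by (intro pint_inv_nat[OF pp]) auto
  then have "pint p (c * (1 / 2))" using c by (intro pint_mult[OF pp]) auto
  moreover have "x - 0 = of_nat p * (c * (1 / 2))" using c by (simp add: field_simps)
  ultimately show ?thesis unfolding rc_def by blast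
qed

lemma alg_m1:
  fixes a b c m :: rat
  assumes "m * m = 1"
  shows "- a * ((m * b) * (m * c)) = - (a * b * c)"
proof -
  have "- a * ((m * b) * (m * c)) = - (a * b * c) * (m * m)" by (simp add: algebra_simps)
  then show ?thesis using assms by simp
qed

lemma main_red:
  assumes n: "1 \<le> n" "n + 1 < p"
    and sym: "\<And>s. s \<in> {1..<p} \<Longrightarrow> [W p w (p - s) = (-1) ^ n * W p w s] (mod int p)"
  shows "rc p (\<Sum>x\<in>{1..<p}. of_int (w x) * (1 / of_nat x * E p (n - 1) (Suc x))) 0"
proof -
  have odd: "odd p" using n pp prime_odd_nat[of p] by auto
  define t where "t s = (-1) ^ s * (1 / of_nat s) ^ n * (of_int (W p w s) :: rat)" for s
  have step1: "rc p (\<Sum>x\<in>{1..<p}. of_int (w x) * (1 / of_nat x * E p (n - 1) (Suc x)))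
                    (\<Sum>x\<in>{1..<p}. of_int (w x) * (1 / of_nat x * F p (n - 1) (Suc x)))"
  proof (rule rc_sum[OF pp])
    fix x assume x: "x \<in> {1..<p}"
    have "rc p (E p (n - 1) (Suc x)) (F p (n - 1) (Suc x))"
    proof (cases "n - 1 = 0")
      case True
      then show ?thesis using F_0[of x p] x by auto
    next
      case False
      then show ?thesis using x n by (intro EF[OF pp]) auto
    qed
    then show "rc p (of_int (w x) * (1 / of_nat x * E p (n - 1) (Suc x)))
                    (of_int (w x) * (1 / of_nat x * F p (n - 1) (Suc x)))"
      using x by (intro rc_mult_left[OF pp] pint_inv_nat[OF pp]) auto
  qed
  have nn: "n - 1 + 1 = n" using n by simp
  have step2: "(\<Sum>x\<in>{1..<p}. of_int (w x) * (1 / of_nat x * F p (n - 1) (Suc x)))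
      = (-1) ^ n * (\<Sum>s\<in>{1..<p}. t s)"
  proof -
    have "(\<Sum>x\<in>{1..<p}. of_int (w x) * (1 / of_nat x * F p (n - 1) (Suc x)))
      = (\<Sum>x\<in>{1..<p}. \<Sum>s\<in>{1..<p}. (-1) ^ n * ((-1) ^ s * (1 / of_nat s) ^ n *
            (of_int (w x) * of_nat (x - 1 choose (s - 1)))))"
    proof (rule sum.cong[OF refl])
      fix x assume x: "x \<in> {1..<p}"
      have f: "1 / of_nat x * F p (n - 1) (Suc x) = (-1) ^ n *
          (\<Sum>s\<in>{1..<p}. (-1) ^ s * of_nat (x - 1 choose (s - 1)) * (1 / of_nat s) ^ n)"
        using F_shift[of x p "n - 1"] x unfolding nn by auto
      show "of_int (w x) * (1 / of_nat x * F p (n - 1) (Suc x)) =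
          (\<Sum>s\<in>{1..<p}. (-1) ^ n * ((-1) ^ s * (1 / of_nat s) ^ n *
            (of_int (w x) * of_nat (x - 1 choose (s - 1)))))"
        unfolding f by (simp add: sum_distrib_left ac_simps)
    qed
    also have "\<dots> = (\<Sum>s\<in>{1..<p}. \<Sum>x\<in>{1..<p}. (-1) ^ n * ((-1) ^ s * (1 / of_nat s) ^ n *
            (of_int (w x) * of_nat (x - 1 choose (s - 1)))))"
      by (rule sum.swap)
    also have "\<dots> = (\<Sum>s\<in>{1..<p}. (-1) ^ n * t s)"
      unfolding t_def W_def by (simp add: sum_distrib_left of_int_sum)
    also have "\<dots> = (-1) ^ n * (\<Sum>s\<in>{1..<p}. t s)"
      by (simp add: sum_distrib_left)
    finally show ?thesis .
  qed
  have refl: "rc p (t (p - s)) (- t s)" if s: "s \<in> {1..<p}" for s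
  proof -
    have par: "even (p - s) \<longleftrightarrow> odd s" using s odd by (simp add: even_diff_nat)
    have sg: "(-1) ^ (p - s) = - ((-1) ^ s :: rat)"
      using par by (simp add: minus_one_power_iff)
    have ps: "p - s \<in> {1..<p}" using s by auto
    have a: "rc p ((1 / of_nat (p - s)) ^ n) ((- (1 / of_nat s)) ^ n)"
      using rc_inv_refl[OF s] ps s pint_inv_nat[OF pp, of "p - s"] pint_inv_nat[OF pp, of s]
      by (intro rc_power[OF pp] pint_uminus[OF pp]) auto
    have b: "rc p (of_int (W p w (p - s))) (of_int ((-1) ^ n * W p w s))"
      using sym[OF s] by (rule rc_int[OF pp])
    have "rc p ((1 / of_nat (p - s)) ^ n * of_int (W p w (p - s)))
               ((- (1 / of_nat s)) ^ n * of_int ((-1) ^ n * W p w s))"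
    proof (rule rc_mult[OF pp _ _ a b])
      show "pint p ((- (1 / of_nat s)) ^ n)"
        using s by (intro pint_power[OF pp] pint_uminus[OF pp] pint_inv_nat[OF pp]) auto
    qed simp
    then have rr: "rc p (- ((-1) ^ s) * ((1 / of_nat (p - s)) ^ n * of_int (W p w (p - s))))
               (- ((-1) ^ s) * ((- (1 / of_nat s)) ^ n * of_int ((-1) ^ n * W p w s)))"
      using pint_uminus[OF pp pint_m1[OF pp, of s]] by (intro rc_mult_left[OF pp]) auto
    have eq: "- ((-1) ^ s) * ((- (1 / of_nat s)) ^ n * of_int ((-1) ^ n * W p w s)) = - t s"
    proof -
      have "(- (1 / of_nat s :: rat)) ^ n = (-1) ^ n * (1 / of_nat s) ^ n"
        by (rule power_minus)
      moreover have "((-1) ^ n * (-1) ^ n :: rat) = 1"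
        by (simp flip: power_add)
      ultimately show ?thesis unfolding t_def of_int_mult of_int_power of_int_minus of_int_1
        by (simp only: alg_m1)
    qed
    have e1: "t (p - s) = - ((-1) ^ s) * ((1 / of_nat (p - s)) ^ n * of_int (W p w (p - s)))"
      unfolding t_def sg by (simp only: mult.assoc)
    show ?thesis unfolding e1 eq[symmetric] by (rule rr)
  qed
  have "(\<Sum>s\<in>{1..<p}. t s) = (\<Sum>s\<in>{1..<p}. t (p - s))"
    by (subst sum.atLeastLessThan_rev) simp
  also have "rc p \<dots> (\<Sum>s\<in>{1..<p}. - t s)"
    by (rule rc_sum[OF pp]) (rule refl)
  finally have "rc p (\<Sum>s\<in>{1..<p}. t s) (- (\<Sum>s\<in>{1..<p}. t s))"
    by (simp add: sum_negf)
  then have S0: "rc p (\<Sum>s\<in>{1..<p}. t s) 0" by (rule rc_half[OF odd])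
  have "rc p ((-1) ^ n * (\<Sum>s\<in>{1..<p}. t s)) ((-1) ^ n * 0)"
    by (rule rc_mult_left[OF pp pint_m1[OF pp] S0])
  then have "rc p (\<Sum>x\<in>{1..<p}. of_int (w x) * (1 / of_nat x * F p (n - 1) (Suc x))) 0"
    unfolding step2 by simp
  from rc_trans[OF pp step1 this] show ?thesis .
qed

end

lemma reflect:
  fixes V c :: "nat \<Rightarrow> int" and e :: int and p :: nat
  assumes p2: "2 \<le> p"
    and V0: "\<And>j. p - 1 \<le> j \<Longrightarrow> V j = 0"
    and rec: "\<And>m. V m + (if 1 \<le> m then V (m - 1) else 0) + (if 2 \<le> m then V (m - 2) else 0) = c m"
    and cs: "\<And>j. j \<le> p - 2 \<Longrightarrow> [c (p - j) = e * c j] (mod int p)"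
  shows "j \<le> p - 2 \<Longrightarrow> [V (p - 2 - j) = e * V j] (mod int p)"
proof (induction j rule: less_induct)
  case (less j)
  define A where "A j = (if 1 \<le> j then V (j - 1) else 0)" for j
  define B where "B j = (if 2 \<le> j then V (j - 2) else 0)" for j
  have hA: "[V (p - j - 1) = e * A j] (mod int p)"
  proof (cases "j = 0")
    case True
    then show ?thesis using V0[of "p - 1"] by (simp add: A_def)
  next
    case False
    then have "[V (p - 2 - (j - 1)) = e * V (j - 1)] (mod int p)" using less.IH[of "j - 1"] less.prems by simp
    moreover have "p - 2 - (j - 1) = p - j - 1" using False less.prems by auto
    ultimately show ?thesis using False by (simp add: A_def)
  qed
  have hB: "[V (p - j) = e * B j] (mod int p)"
  proof (cases "j \<le> 1")
    case True
    then show ?thesis using V0[of "p - j"] by (auto simp: B_def)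
  next
    case False
    then have "[V (p - 2 - (j - 2)) = e * V (j - 2)] (mod int p)" using less.IH[of "j - 2"] less.prems by simp
    moreover have "p - 2 - (j - 2) = p - j" using False less.prems by auto
    ultimately show ?thesis using False by (simp add: B_def)
  qed
  have r1: "V (p - 2 - j) = c (p - j) - V (p - j - 1) - V (p - j)"
  proof -
    have "V (p - j) + V (p - j - 1) + V (p - j - 2) = c (p - j)"
    proof -
      have "2 \<le> p - j" using less.prems p2 by linarith
      then show ?thesis using rec[of "p - j"] by simp
    qed
    moreover have "p - j - 2 = p - 2 - j" by simp
    ultimately show ?thesis by simp
  qed
  have r2: "V j = c j - A j - B j" using rec[of j] unfolding A_def B_def by simp
  have "[c (p - j) - V (p - j - 1) - V (p - j) = e * c j - e * A j - e * B j] (mod int p)"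
    using cs[OF less.prems] hA hB by (intro cong_diff) auto
  then show ?case unfolding r1 r2 by (simp add: algebra_simps)
qed

lemma choose_rec_int:
  assumes "1 \<le> a"
  shows "int (a - 1 choose m) + (if 1 \<le> m then int (a - 1 choose (m - 1)) else 0)
     + (if 2 \<le> m then int (a - 1 choose (m - 2)) else 0)
     = int (a - 1 choose m) - int (a choose m) + int (Suc a choose m)"
proof -
  obtain b where b: "a = Suc b" using assms by (cases a) auto
  show ?thesis
  proof (cases m)
    case 0
    then show ?thesis by simp
  next
    case (Suc m')
    have e: "Suc (Suc b) choose Suc m' = (Suc b choose m') + (Suc b choose Suc m')" by simp
    show ?thesis
    proof (cases m')
      case 0
      then show ?thesis using Suc b by simp
    next
      case (Suc m'')
      have "Suc b choose Suc m'' = (b choose m'') + (b choose Suc m'')" by simp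
      then show ?thesis using e b Suc \<open>m = Suc m'\<close> by simp
    qed
  qed
qed

definition V :: "nat \<Rightarrow> (nat \<Rightarrow> int) \<Rightarrow> nat \<Rightarrow> int" where
  "V p w j = (\<Sum>a\<in>{1..<p}. w a * int (a - 1 choose j))"

definition C :: "nat \<Rightarrow> (nat \<Rightarrow> int) \<Rightarrow> nat \<Rightarrow> int" where
  "C p w m = (\<Sum>a\<in>{1..<p}. w a * (int (a - 1 choose m) - int (a choose m) + int (Suc a choose m)))"

lemma V0: "p - 1 \<le> j \<Longrightarrow> V p w j = 0"
  unfolding V_def by (rule sum.neutral) auto

lemma V_rec: "V p w m + (if 1 \<le> m then V p w (m - 1) else 0) + (if 2 \<le> m then V p w (m - 2) else 0) = C p w m"
proof -
  have "V p w m + (if 1 \<le> m then V p w (m - 1) else 0) + (if 2 \<le> m then V p w (m - 2) else 0)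
    = (\<Sum>a\<in>{1..<p}. w a * (int (a - 1 choose m) + (if 1 \<le> m then int (a - 1 choose (m - 1)) else 0)
     + (if 2 \<le> m then int (a - 1 choose (m - 2)) else 0)))"
    unfolding V_def by (simp add: sum.distrib algebra_simps)
  also have "\<dots> = C p w m"
    unfolding C_def by (rule sum.cong[OF refl]) (subst choose_rec_int, auto)
  finally show ?thesis .
qed

lemma W_V: "1 \<le> s \<Longrightarrow> W p w s = V p w (s - 1)"
  unfolding W_def V_def by simp

definition f1 :: "nat \<Rightarrow> int" where
  "f1 r = (if r \<in> {1, 2} then 1 else 0) - (if r \<in> {4, 5} then 1 else 0)"

definition f2 :: "nat \<Rightarrow> int" where
  "f2 r = (if r mod 3 = 0 then (if even r then 1 else -1) else 0) - (if r \<in> {2, 3, 4} then 2 else 0)"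

definition w1 :: "nat \<Rightarrow> int" where
  "w1 x = (if x mod 6 \<in> {1, 2} then 1 else 0) - (if x mod 6 \<in> {4, 5} then 1 else 0)"

definition w2 :: "nat \<Rightarrow> int" where
  "w2 x = (if x mod 3 = 0 then (-1) ^ x else 0) - (if x mod 6 \<in> {2, 3, 4} then 2 else 0)"

lemma w1_f1: "w1 x = f1 (x mod 6)"
  unfolding w1_def f1_def by simp

lemma w2_f2: "w2 x = f2 (x mod 6)"
proof -
  have a: "x mod 6 mod 3 = x mod 3" by (simp add: mod_mod_cancel)
  have c: "x mod 6 mod 2 = x mod 2" by (simp add: mod_mod_cancel)
  have b: "even (x mod 6) \<longleftrightarrow> even x" by (simp only: even_iff_mod_2_eq_zero c)
  show ?thesis unfolding w2_def f2_def a b by simp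
qed

lemma r6: "(r::nat) < 6 \<Longrightarrow> r = 0 \<or> r = 1 \<or> r = 2 \<or> r = 3 \<or> r = 4 \<or> r = 5" by linarith

lemma w1_rec: "w1 (a + 2) = w1 (a + 1) - w1 a"
proof -
  have e1: "(a + 1) mod 6 = (a mod 6 + 1) mod 6" and e2: "(a + 2) mod 6 = (a mod 6 + 2) mod 6"
    by (rule mod_add_left_eq[symmetric])+
  have "a mod 6 < 6" by simp
  from r6[OF this] show ?thesis unfolding w1_f1 e1 e2 by (elim disjE) (simp_all add: f1_def)
qed

lemma w2_rec: "w2 (a + 2) = w2 (a + 1) - w2 a - 1"
proof -
  have e1: "(a + 1) mod 6 = (a mod 6 + 1) mod 6" and e2: "(a + 2) mod 6 = (a mod 6 + 2) mod 6"
    by (rule mod_add_left_eq[symmetric])+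
  have "a mod 6 < 6" by simp
  from r6[OF this] show ?thesis unfolding w2_f2 e1 e2 by (elim disjE) (simp_all add: f2_def)
qed

lemma alg_T1: assumes "x = y - z" "(L::int) = c + (x - y) * A + y * B" shows "L + z * (A - B + D) = c + (y - z) * B + z * D"
  unfolding assms by (simp add: algebra_simps)

lemma alg_T2: assumes "x = y - z - 1" "EE' = A + EE" "(L::int) = c - EE + (x - y) * A + y * B"
   shows "L + z * (A - B + D) = c - EE' + (y - z) * B + z * D"
  unfolding assms by (simp add: algebra_simps)

lemma T1: "1 \<le> N \<Longrightarrow> (\<Sum>a\<in>{1..N}. w1 a * (int (a - 1 choose m) - int (a choose m) + int (Suc a choose m)))
   = (if m = 0 then 1 else 0) + (w1 (N - 1) - w1 N) * int (N choose m) + w1 N * int (Suc N choose m)"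
proof (induction N rule: nat_induct_at_least)
  case base
  have "w1 0 = 0" "w1 1 = 1" by (simp_all add: w1_def)
  then show ?case by (cases m) simp_all
next
  case (Suc N)
  have rec: "w1 (N - 1) = w1 N - w1 (Suc N)"
    using w1_rec[of "N - 1"] Suc.hyps by (simp add: Suc_diff_le)
  have "{1..Suc N} = insert (Suc N) {1..N}" by auto
  then have "(\<Sum>a\<in>{1..Suc N}. w1 a * (int (a - 1 choose m) - int (a choose m) + int (Suc a choose m)))
     = (\<Sum>a\<in>{1..N}. w1 a * (int (a - 1 choose m) - int (a choose m) + int (Suc a choose m)))
       + w1 (Suc N) * (int (N choose m) - int (Suc N choose m) + int (Suc (Suc N) choose m))"
    by simp
  also have "\<dots> = (if m = 0 then 1 else 0) + (w1 N - w1 (Suc N)) * int (Suc N choose m) + w1 (Suc N) * int (Suc (Suc N) choose m)"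
    by (rule alg_T1[OF rec Suc.IH])
  finally show ?case by simp
qed

lemma T2: "1 \<le> N \<Longrightarrow> (\<Sum>a\<in>{1..N}. w2 a * (int (a - 1 choose m) - int (a choose m) + int (Suc a choose m)))
   = (if m = 0 then 1 else 0) - int (1 choose m) - int (N choose Suc m)
     + (w2 (N - 1) - w2 N) * int (N choose m) + w2 N * int (Suc N choose m)"
proof (induction N rule: nat_induct_at_least)
  case base
  have "w2 0 = 1" "w2 1 = 0" by (simp_all add: w2_def)
  then show ?case by (cases m) simp_all
next
  case (Suc N)
  have rec: "w2 (N - 1) = w2 N - w2 (Suc N) - 1"
    using w2_rec[of "N - 1"] Suc.hyps by (simp add: Suc_diff_le)
  have pas: "int (Suc N choose Suc m) = int (N choose m) + int (N choose Suc m)" by simp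
  have "{1..Suc N} = insert (Suc N) {1..N}" by auto
  then have "(\<Sum>a\<in>{1..Suc N}. w2 a * (int (a - 1 choose m) - int (a choose m) + int (Suc a choose m)))
     = (\<Sum>a\<in>{1..N}. w2 a * (int (a - 1 choose m) - int (a choose m) + int (Suc a choose m)))
       + w2 (Suc N) * (int (N choose m) - int (Suc N choose m) + int (Suc (Suc N) choose m))"
    by simp
  also have "\<dots> = ((if m = 0 then 1 else 0) - int (1 choose m)) - int (Suc N choose Suc m)
     + (w2 N - w2 (Suc N)) * int (Suc N choose m) + w2 (Suc N) * int (Suc (Suc N) choose m)"
    by (rule alg_T2[OF rec pas]) (use Suc.IH in simp)
  finally show ?case by simp
qed

lemma modsub1: "(p::nat) mod 6 = r \<Longrightarrow> k \<le> r \<Longrightarrow> (p - k) mod 6 = r - k"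
proof -
  assume h: "p mod 6 = r" "k \<le> r"
  have e: "p = 6 * (p div 6) + p mod 6" by simp
  have "p - k = (r - k) + 6 * (p div 6)" using h e by linarith
  moreover have "r - k < 6" using h by simp
  ultimately show ?thesis by simp
qed

lemma modsub2: "(p::nat) mod 6 = r \<Longrightarrow> r < k \<Longrightarrow> k \<le> 6 \<Longrightarrow> k \<le> p \<Longrightarrow> (p - k) mod 6 = r + 6 - k"
proof -
  assume h: "p mod 6 = r" "r < k" "k \<le> 6" "k \<le> p"
  have e: "p = 6 * (p div 6) + p mod 6" by simp
  have "p - k + 6 = (r + 6 - k) + 6 * (p div 6)" using h e by linarith
  then have "(p - k + 6) mod 6 = (r + 6 - k) mod 6" by simp
  moreover have "(p - k + 6) mod 6 = (p - k) mod 6" by simp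
  moreover have "r + 6 - k < 6" using h by simp
  ultimately show ?thesis by simp
qed

lemma p_mod6:
  assumes "prime (p::nat)" "3 < p"
  shows "p mod 6 = 1 \<or> p mod 6 = 5"
proof -
  have lt: "p mod 6 < 6" by simp
  have o: "odd p" using prime_odd_nat[OF assms(1)] assms(2) by simp
  have c: "p mod 6 mod 2 = p mod 2" by (simp add: mod_mod_cancel)
  have m1: "p mod 6 mod 2 = 1" unfolding c using o by (simp add: odd_iff_mod_2_eq_one)
  have ne: "p mod 6 \<noteq> 0 \<and> p mod 6 \<noteq> 2 \<and> p mod 6 \<noteq> 4"
  proof (intro conjI notI)
    assume "p mod 6 = 0" then show False using m1 by simp
  next
    assume "p mod 6 = 2" then show False using m1 by simp
  next
    assume "p mod 6 = 4" then show False using m1 by simp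
  qed
  have "p mod 6 \<noteq> 3"
  proof
    assume h: "p mod 6 = 3"
    have "p mod 6 mod 3 = p mod 3" by (simp add: mod_mod_cancel)
    then have "p mod 3 = 0" using h by simp
    then have "3 dvd p" by (simp add: mod_eq_0_iff_dvd)
    moreover have "\<forall>m. m dvd p \<longrightarrow> m = 1 \<or> m = p"
      using prime_nat_iff[THEN iffD1, OF assms(1)] by (rule conjunct2)
    ultimately have "(3::nat) = 1 \<or> 3 = p" by blast
    then show False using assms by simp
  qed
  with lt ne show ?thesis by linarith
qed

lemma K1:
  assumes "prime (p::nat)" "3 \<le> p"
  shows "[1 + w1 (p - 2) + w1 (p - 1) = 0] (mod int p)"
proof (cases "p = 3")
  case True
  have "w1 1 = 1" "w1 2 = 1" by (simp_all add: w1_def)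
  then show ?thesis using True by (simp add: cong_def)
next
  case False
  then have "3 < p" using assms by simp
  then have "p mod 6 = 1 \<or> p mod 6 = 5" using p_mod6 assms by blast
  then show ?thesis
  proof
    assume h: "p mod 6 = 1"
    have "(p - 2) mod 6 = 5" using modsub2[OF h] \<open>3 < p\<close> by simp
    moreover have "(p - 1) mod 6 = 0" using modsub1[OF h] by simp
    ultimately show ?thesis by (simp add: w1_f1 f1_def)
  next
    assume h: "p mod 6 = 5"
    have "(p - 2) mod 6 = 3" "(p - 1) mod 6 = 4" using modsub1[OF h] by simp_all
    then show ?thesis by (simp add: w1_f1 f1_def)
  qed
qed

lemma K2:
  assumes "prime (p::nat)" "3 < p"
  shows "w2 (p - 2) - w2 (p - 1) = -1"
proof -
  have "p mod 6 = 1 \<or> p mod 6 = 5" using p_mod6 assms by blast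
  then show ?thesis
  proof
    assume h: "p mod 6 = 1"
    have "(p - 2) mod 6 = 5" using modsub2[OF h] assms by simp
    moreover have "(p - 1) mod 6 = 0" using modsub1[OF h] by simp
    ultimately show ?thesis by (simp add: w2_f2 f2_def)
  next
    assume h: "p mod 6 = 5"
    have "(p - 2) mod 6 = 3" "(p - 1) mod 6 = 4" using modsub1[OF h] by simp_all
    then show ?thesis by (simp add: w2_f2 f2_def)
  qed
qed

context fixes p :: nat assumes pp: "prime p" begin

lemma p2: "2 \<le> p" using prime_ge_2_nat[OF pp] .

lemma ivl: "{1..<p} = {1..p - 1}" using p2 by auto

lemma C1_closed: "C p w1 m = (if m = 0 then 1 else 0) + (w1 (p - 2) - w1 (p - 1)) * int (p - 1 choose m)
    + w1 (p - 1) * int (p choose m)"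
proof -
  have "C p w1 m = (if m = 0 then 1 else 0) + (w1 (p - 1 - 1) - w1 (p - 1)) * int (p - 1 choose m)
    + w1 (p - 1) * int (Suc (p - 1) choose m)"
    unfolding C_def ivl using p2 by (intro T1) auto
  moreover have "Suc (p - 1) = p" "p - 1 - 1 = p - 2" using p2 by auto
  ultimately show ?thesis by simp
qed

lemma C2_closed: "C p w2 m = (if m = 0 then 1 else 0) - int (1 choose m) - int (p - 1 choose Suc m)
     + (w2 (p - 2) - w2 (p - 1)) * int (p - 1 choose m) + w2 (p - 1) * int (p choose m)"
proof -
  have "C p w2 m = (if m = 0 then 1 else 0) - int (1 choose m) - int (p - 1 choose Suc m)
     + (w2 (p - 1 - 1) - w2 (p - 1)) * int (p - 1 choose m) + w2 (p - 1) * int (Suc (p - 1) choose m)"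
    unfolding C_def ivl using p2 by (intro T2) auto
  moreover have "Suc (p - 1) = p" "p - 1 - 1 = p - 2" using p2 by auto
  ultimately show ?thesis by simp
qed

lemma bp0: "0 < k \<Longrightarrow> k < p \<Longrightarrow> [int (p choose k) = 0] (mod int p)"
proof -
  assume "0 < k" "k < p"
  then have "p dvd (p choose k)" using pp by (intro dvd_choose_prime) auto
  then show ?thesis by (simp add: cong_0_iff)
qed

lemma Sym1:
  assumes "3 \<le> p" "j \<le> p - 2"
  shows "[C p w1 (p - j) = -1 * C p w1 j] (mod int p)"
proof (cases "j = 0")
  case True
  have k: "[1 + w1 (p - 2) + w1 (p - 1) = 0] (mod int p)" using K1[OF pp assms(1)] .
  have "C p w1 p = w1 (p - 1)" using p2 by (simp add: C1_closed)
  moreover have "C p w1 0 = 1 + (w1 (p - 2) - w1 (p - 1)) + w1 (p - 1)" by (simp add: C1_closed)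
  moreover have "[w1 (p - 1) = w1 (p - 1) - (1 + w1 (p - 2) + w1 (p - 1))] (mod int p)"
    using cong_sym[OF cong_diff[OF cong_refl[of "w1 (p - 1)"] k]] by simp
  ultimately show ?thesis using True by (simp add: algebra_simps)
next
  case False
  define \<alpha> where "\<alpha> = w1 (p - 2) - w1 (p - 1)"
  define \<beta> where "\<beta> = w1 (p - 1)"
  have j: "0 < j" "j < p" "0 < p - j" "p - j < p" "p - j \<le> p - 1" "j \<le> p - 1" using False assms by auto
  have odd: "odd p" using prime_odd_nat[OF pp] assms(1) by simp
  have sg: "(-1) ^ (p - j) = - ((-1) ^ j :: int)"
  proof -
    have "even (p - j) \<longleftrightarrow> odd j" using j odd by (simp add: even_diff_nat)
    then show ?thesis by (simp add: minus_one_power_iff)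
  qed
  have "C p w1 (p - j) = \<alpha> * int (p - 1 choose (p - j)) + \<beta> * int (p choose (p - j))"
    using j unfolding \<alpha>_def \<beta>_def by (simp add: C1_closed)
  also have "[\<dots> = \<alpha> * (-1) ^ (p - j) + \<beta> * 0] (mod int p)"
    using binom_pm1[OF pp j(5)] bp0[OF j(3,4)] by (intro cong_add cong_mult cong_refl)
  also have "\<alpha> * (-1) ^ (p - j) + \<beta> * 0 = -1 * (\<alpha> * (-1) ^ j + \<beta> * 0)" using sg by simp
  also have "[-1 * (\<alpha> * (-1) ^ j + \<beta> * 0) = -1 * (\<alpha> * int (p - 1 choose j) + \<beta> * int (p choose j))] (mod int p)"
    using cong_sym[OF binom_pm1[OF pp j(6)]] cong_sym[OF bp0[OF j(1,2)]]
    by (intro cong_add cong_mult cong_refl)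
  also have "\<alpha> * int (p - 1 choose j) + \<beta> * int (p choose j) = C p w1 j"
    using j unfolding \<alpha>_def \<beta>_def by (simp add: C1_closed)
  finally show ?thesis .
qed

lemma Sym2:
  assumes "3 < p" "j \<le> p - 2"
  shows "[C p w2 (p - j) = 1 * C p w2 j] (mod int p)"
proof -
  define \<beta> where "\<beta> = w2 (p - 1)"
  have Cf: "C p w2 m = (if m = 0 then 1 else 0) - int (1 choose m) - int (p choose Suc m) + \<beta> * int (p choose m)" for m
  proof -
    have "int (p choose Suc m) = int (p - 1 choose m) + int (p - 1 choose Suc m)"
    proof -
      have "p = Suc (p - 1)" using p2 by simp
      then have "p choose Suc m = (p - 1 choose m) + (p - 1 choose Suc m)" by (metis binomial_Suc_Suc)
      then show ?thesis by simp
    qed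
    then show ?thesis using K2[OF pp assms(1)] unfolding \<beta>_def by (simp add: C2_closed)
  qed
  consider "j = 0" | "j = 1" | "2 \<le> j" by linarith
  then show ?thesis
  proof cases
    case 1
    have "C p w2 p = \<beta>" using Cf[of p] p2 by simp
    moreover have "C p w2 0 = \<beta> - int p" using Cf[of 0] by simp
    moreover have "[\<beta> = \<beta> - int p] (mod int p)" by (simp add: cong_iff_dvd_diff)
    ultimately show ?thesis using 1 by simp
  next
    case 2
    have pc: "p choose (p - 1) = p" using binomial_symmetric[of "p - 1" p] p2 by simp
    have oc: "1 choose (p - 1) = 0" using assms by (intro binomial_eq_0) auto
    have e1: "C p w2 (p - 1) = -1 + \<beta> * int p" using Cf[of "p - 1"] p2 pc oc by simp
    have e2: "C p w2 1 = - 1 - int (p choose 2) + \<beta> * int p" using Cf[of 1] by (simp add: numeral_2_eq_2)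
    have d: "C p w2 (p - 1) - C p w2 1 = int (p choose 2)" using e1 e2 by simp
    have "[int (p choose 2) = 0] (mod int p)" using bp0[of 2] assms by auto
    then have "int p dvd C p w2 (p - 1) - C p w2 1" unfolding d by (simp add: cong_0_iff)
    then have "[C p w2 (p - 1) = C p w2 1] (mod int p)" by (simp add: cong_iff_dvd_diff)
    then show ?thesis using 2 by simp
  next
    case 3
    have a: "[C p w2 (p - j) = 0] (mod int p)"
    proof -
      have "C p w2 (p - j) = - int (p choose Suc (p - j)) + \<beta> * int (p choose (p - j))"
      proof -
        have "2 \<le> p - j" using 3 assms by linarith
        then have "1 choose (p - j) = 0" "p - j \<noteq> 0" by (auto intro: binomial_eq_0)
        then show ?thesis using Cf[of "p - j"] by simp
      qed
      also have "[\<dots> = - 0 + \<beta> * 0] (mod int p)"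
        using 3 assms by (intro cong_add cong_mult cong_refl cong_minus_minus_iff[THEN iffD2] bp0) auto
      finally show ?thesis by simp
    qed
    have b: "[C p w2 j = 0] (mod int p)"
    proof -
      have "C p w2 j = - int (p choose Suc j) + \<beta> * int (p choose j)"
        using Cf[of j] 3 by simp
      also have "[\<dots> = - 0 + \<beta> * 0] (mod int p)"
        using 3 assms by (intro cong_add cong_mult cong_refl cong_minus_minus_iff[THEN iffD2] bp0) auto
      finally show ?thesis by simp
    qed
    show ?thesis using cong_trans[OF a cong_sym[OF b]] by simp
  qed
qed

lemma Wsym:
  assumes cs: "\<And>j. j \<le> p - 2 \<Longrightarrow> [C p w (p - j) = e * C p w j] (mod int p)"
    and s: "s \<in> {1..<p}"
  shows "[W p w (p - s) = e * W p w s] (mod int p)"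
proof -
  have "[V p w (p - 2 - (s - 1)) = e * V p w (s - 1)] (mod int p)"
  proof (rule reflect[of p "V p w" "C p w" e "s - 1"])
    show "2 \<le> p" by (rule p2)
    show "V p w j = 0" if "p - 1 \<le> j" for j using that by (rule V0)
    show "V p w m + (if 1 \<le> m then V p w (m - 1) else 0) + (if 2 \<le> m then V p w (m - 2) else 0) = C p w m"
      for m by (rule V_rec)
    show "[C p w (p - j) = e * C p w j] (mod int p)" if "j \<le> p - 2" for j using that by (rule cs)
    show "s - 1 \<le> p - 2" using s by auto
  qed
  moreover have "W p w (p - s) = V p w (p - 2 - (s - 1))" using s by (subst W_V) auto
  moreover have "W p w s = V p w (s - 1)" using s by (subst W_V) auto
  ultimately show ?thesis by simp
qed

end

theorem theorem1p1:
  fixes n p :: nat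
  assumes "n > 0" and "prime p" and "p > n + 1"
  shows "(odd n \<longrightarrow>
           rat_cong
             (\<Sum>xs\<in>{xs\<in>incr_tuples n p. hd xs mod 6 \<in> {1, 2}}. 1 / (\<Prod>i\<leftarrow>xs. of_nat i))
             (\<Sum>xs\<in>{xs\<in>incr_tuples n p. hd xs mod 6 \<in> {4, 5}}. 1 / (\<Prod>i\<leftarrow>xs. of_nat i))
             (int p))
       \<and> (even n \<longrightarrow>
           rat_cong
             (\<Sum>xs\<in>{xs\<in>incr_tuples n p. hd xs mod 3 = 0}. (-1) ^ hd xs / (\<Prod>i\<leftarrow>xs. of_nat i))
             (2 * (\<Sum>xs\<in>{xs\<in>incr_tuples n p. hd xs mod 6 \<in> {2, 3, 4}}. 1 / (\<Prod>i\<leftarrow>xs. of_nat i)))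
             (int p))"
proof -
  have pp: "prime p" by fact
  obtain k where nk: "n = Suc k" using assms(1) by (cases n) auto
  define G where "G x = 1 / of_nat x * E p k (Suc x)" for x
  have ws: "(\<Sum>xs\<in>{xs\<in>incr_tuples n p. P (hd xs)}. c (hd xs) / (\<Prod>i\<leftarrow>xs. of_nat i))
      = (\<Sum>x\<in>{1..<p}. (if P x then c x else 0) * G x)" for P c
    unfolding nk G_def by (rule weighted_sum)
  have red: "rc p (\<Sum>x\<in>{1..<p}. of_int (w x) * G x) 0"
    if "\<And>s. s \<in> {1..<p} \<Longrightarrow> [W p w (p - s) = (-1) ^ n * W p w s] (mod int p)" for w
  proof -
    have "rc p (\<Sum>x\<in>{1..<p}. of_int (w x) * (1 / of_nat x * E p (n - 1) (Suc x))) 0"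
      using assms that by (intro main_red[OF pp]) auto
    then show ?thesis unfolding G_def nk by simp
  qed
  have fin: "rc p (L - R) 0 \<Longrightarrow> rat_cong L R (int p)" for L R
  proof -
    assume "rc p (L - R) 0"
    then have "rc p L R" unfolding rc_def by simp
    then show ?thesis by (rule rc_rat_cong[OF pp])
  qed
  show ?thesis
  proof (intro conjI impI)
    assume odd: "odd n"
    have "3 \<le> p" using assms by simp
    have sym: "[W p w1 (p - s) = (-1) ^ n * W p w1 s] (mod int p)" if "s \<in> {1..<p}" for s
      using Wsym[OF pp, of w1 "-1" s] Sym1[OF pp \<open>3 \<le> p\<close>] that odd by simp
    have "(\<Sum>xs\<in>{xs\<in>incr_tuples n p. hd xs mod 6 \<in> {1, 2}}. 1 / (\<Prod>i\<leftarrow>xs. of_nat i))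
        - (\<Sum>xs\<in>{xs\<in>incr_tuples n p. hd xs mod 6 \<in> {4, 5}}. 1 / (\<Prod>i\<leftarrow>xs. of_nat i))
        = (\<Sum>x\<in>{1..<p}. of_int (w1 x) * G x)"
      using ws[where P="\<lambda>i. i mod 6 \<in> {1, 2}" and c="\<lambda>_. 1"] ws[where P="\<lambda>i. i mod 6 \<in> {4, 5}" and c="\<lambda>_. 1"]
      by (simp add: w1_def sum_subtractf[symmetric] if_distrib[where f="of_int :: int \<Rightarrow> rat"] algebra_simps cong: if_cong)
    then show "rat_cong
             (\<Sum>xs\<in>{xs\<in>incr_tuples n p. hd xs mod 6 \<in> {1, 2}}. 1 / (\<Prod>i\<leftarrow>xs. of_nat i))
             (\<Sum>xs\<in>{xs\<in>incr_tuples n p. hd xs mod 6 \<in> {4, 5}}. 1 / (\<Prod>i\<leftarrow>xs. of_nat i))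
             (int p)"
      using red[OF sym] fin by simp
  next
    assume even: "even n"
    have "3 < p" using assms even by presburger
    have sym: "[W p w2 (p - s) = (-1) ^ n * W p w2 s] (mod int p)" if "s \<in> {1..<p}" for s
      using Wsym[OF pp, of w2 1 s] Sym2[OF pp \<open>3 < p\<close>] that even by simp
    have "(\<Sum>xs\<in>{xs\<in>incr_tuples n p. hd xs mod 3 = 0}. (-1) ^ hd xs / (\<Prod>i\<leftarrow>xs. of_nat i))
        - 2 * (\<Sum>xs\<in>{xs\<in>incr_tuples n p. hd xs mod 6 \<in> {2, 3, 4}}. 1 / (\<Prod>i\<leftarrow>xs. of_nat i))
        = (\<Sum>x\<in>{1..<p}. of_int (w2 x) * G x)"
      using ws[where P="\<lambda>i. i mod 3 = 0" and c="\<lambda>i. (-1) ^ i"] ws[where P="\<lambda>i. i mod 6 \<in> {2, 3, 4}" and c="\<lambda>_. 1"]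
      by (simp add: w2_def sum_subtractf[symmetric] if_distrib[where f="of_int :: int \<Rightarrow> rat"] sum_distrib_left if_distrib[where f="\<lambda>x. (2::rat) * x"] algebra_simps cong: if_cong)
    then show "rat_cong
             (\<Sum>xs\<in>{xs\<in>incr_tuples n p. hd xs mod 3 = 0}. (-1) ^ hd xs / (\<Prod>i\<leftarrow>xs. of_nat i))
             (2 * (\<Sum>xs\<in>{xs\<in>incr_tuples n p. hd xs mod 6 \<in> {2, 3, 4}}. 1 / (\<Prod>i\<leftarrow>xs. of_nat i)))
             (int p)"
      using red[OF sym] fin by simp
  qed
qed


end
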